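(* Let $f\in\mathbb{R}[x,y]$ be an irreducible polynomial and let $X=V(f)=\{(x,y)\in\mathbb{R}^2: f(x,y)=0\}$. Assume $X$ is compact and connected. Then $X$ has a cell decomposition $\mathcal{A}$ with the finiteness property.
   Context: A cell decomposition of a set $X\subseteq\mathbb{R}^2$ is a partition of $X$ into (finitely or countably many) cells, each of which is a semi-algebraic set: 0-cells are points, 1-cells are subsets homeomorphic to an open interval, 2-cells are subsets homeomorphic to an open disk. A shortest-length curve in $X$ between two points $A,B\in X$ is a piecewise $C^2$ curve $\gamma$ from $A$ to $B$ lying entirely in $X$ whose length is minimal among all piecewise $C^2$ curves in $X$ from $A$ to $B$. A geodesic line segment (relative to the decomposition) is either a straight line segment or a connected arc contained (partially or entirely) in a 1-cell. A cell decomposition $\mathcal{A}$ of $X$ has the finiteness property if for every shortest-length curve $\gamma$ in $X$ between two points of $X$ and every cell $e\in\mathcal{A}$, the set $\gamma\cap e$ is either empty or has finitely many connected components, each of which is either a singleton or a geodesic line segment. *)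

theory Defs
  imports "HOL-Analysis.Analysis" "HOL-Computational_Algebra.Polynomial_Factorial"
begin

text \<open>Bivariate real polynomials R[x,y] are represented as real poly poly:
  a polynomial in y whose coefficients are polynomials in x.\<close>

definition eval2 :: "real poly poly \<Rightarrow> real \<times> real \<Rightarrow> real" where
  "eval2 f p = poly (poly f [:snd p:]) (fst p)"

definition zero_set :: "real poly poly \<Rightarrow> (real \<times> real) set" where
  "zero_set f = {p. eval2 f p = 0}"

inductive_set semialgebraic :: "(real \<times> real) set set" where
  sa_pos: "{p. 0 < eval2 g p} \<in> semialgebraic"
| sa_zero: "{p. eval2 g p = 0} \<in> semialgebraic"
| sa_union: "S \<in> semialgebraic \<Longrightarrow> T \<in> semialgebraic \<Longrightarrow> S \<union> T \<in> semialgebraic"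
| sa_compl: "S \<in> semialgebraic \<Longrightarrow> - S \<in> semialgebraic"

definition is_0cell :: "(real \<times> real) set \<Rightarrow> bool" where
  "is_0cell C \<longleftrightarrow> (\<exists>a. C = {a})"

definition is_1cell :: "(real \<times> real) set \<Rightarrow> bool" where
  "is_1cell C \<longleftrightarrow> C homeomorphic {0<..<(1::real)}"

definition is_2cell :: "(real \<times> real) set \<Rightarrow> bool" where
  "is_2cell C \<longleftrightarrow> C homeomorphic ball (0::real \<times> real) 1"

definition cell_decomposition ::
  "(real \<times> real) set set \<Rightarrow> (real \<times> real) set \<Rightarrow> bool" where
  "cell_decomposition \<A> X \<longleftrightarrow>
     countable \<A> \<and> \<Union>\<A> = X \<and> {} \<notin> \<A> \<and>
     (\<forall>C\<in>\<A>. \<forall>D\<in>\<A>. C \<noteq> D \<longrightarrow> C \<inter> D = {}) \<and>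
     (\<forall>C\<in>\<A>. C \<in> semialgebraic \<and> (is_0cell C \<or> is_1cell C \<or> is_2cell C))"

definition C2_on :: "real set \<Rightarrow> (real \<Rightarrow> real \<times> real) \<Rightarrow> bool" where
  "C2_on S g \<longleftrightarrow> (\<exists>g' g''.
     (\<forall>t\<in>S. (g has_vector_derivative g' t) (at t within S)) \<and>
     (\<forall>t\<in>S. (g' has_vector_derivative g'' t) (at t within S)) \<and>
     continuous_on S g'')"

definition piecewise_C2_curve :: "(real \<Rightarrow> real \<times> real) \<Rightarrow> bool" where
  "piecewise_C2_curve g \<longleftrightarrow> continuous_on {0..1} g \<and>
     (\<exists>(n::nat) t. t 0 = 0 \<and> t n = 1 \<and> (\<forall>i<n. t i < t (Suc i)) \<and>
        (\<forall>i<n. C2_on {t i..t (Suc i)} g))"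

definition curve_length :: "(real \<Rightarrow> real \<times> real) \<Rightarrow> real" where
  "curve_length g = (SUP nt \<in> {(n::nat, t). t 0 = 0 \<and> t n = 1 \<and> (\<forall>i<n. t i \<le> t (Suc i))}.
       (\<Sum>i<fst nt. dist (g (snd nt i)) (g (snd nt (Suc i)))))"

definition curve_in :: "(real \<times> real) set \<Rightarrow> (real \<times> real) \<Rightarrow> (real \<times> real)
    \<Rightarrow> (real \<Rightarrow> real \<times> real) \<Rightarrow> bool" where
  "curve_in X A B g \<longleftrightarrow> piecewise_C2_curve g \<and> g 0 = A \<and> g 1 = B \<and> path_image g \<subseteq> X"

definition shortest_curve :: "(real \<times> real) set \<Rightarrow> (real \<times> real) \<Rightarrow> (real \<times> real)
    \<Rightarrow> (real \<Rightarrow> real \<times> real) \<Rightarrow> bool" where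
  "shortest_curve X A B g \<longleftrightarrow> curve_in X A B g \<and>
     (\<forall>h. curve_in X A B h \<longrightarrow> curve_length g \<le> curve_length h)"

text \<open>Geodesic line segment relative to a decomposition: a straight segment
  (open, half-open or closed, nondegenerate) or a connected arc contained in a 1-cell.\<close>

definition geodesic_segment ::
  "(real \<times> real) set set \<Rightarrow> (real \<times> real) set \<Rightarrow> bool" where
  "geodesic_segment \<A> S \<longleftrightarrow>
     (\<exists>a b. a \<noteq> b \<and> open_segment a b \<subseteq> S \<and> S \<subseteq> closed_segment a b) \<or>
     (connected S \<and> (\<exists>a b. a \<in> S \<and> b \<in> S \<and> a \<noteq> b) \<and> (\<exists>D\<in>\<A>. is_1cell D \<and> S \<subseteq> D))"

definition finiteness_property ::
  "(real \<times> real) set set \<Rightarrow> (real \<times> real) set \<Rightarrow> bool" where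
  "finiteness_property \<A> X \<longleftrightarrow>
     (\<forall>A\<in>X. \<forall>B\<in>X. \<forall>g. shortest_curve X A B g \<longrightarrow>
       (\<forall>e\<in>\<A>. path_image g \<inter> e = {} \<or>
          (finite (components (path_image g \<inter> e)) \<and>
           (\<forall>S\<in>components (path_image g \<inter> e).
              (\<exists>a. S = {a}) \<or> geodesic_segment \<A> S))))"

end

theory Submission imports Defs "HOL-Computational_Algebra.Field_as_Ring" begin

lemma eval2_add: "eval2 (g + h) p = eval2 g p + eval2 h p"
  by (simp add: eval2_def)
lemma eval2_diff: "eval2 (g - h) p = eval2 g p - eval2 h p"
  by (simp add: eval2_def)
lemma eval2_mult: "eval2 (g * h) p = eval2 g p * eval2 h p"
  by (simp add: eval2_def)
lemma eval2_pCons: "eval2 (pCons a g) (x, y) = poly a x + y * eval2 g (x, y)"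
  by (simp add: eval2_def)

definition sec :: "real \<Rightarrow> real poly poly \<Rightarrow> real poly" where
  "sec x g = map_poly (\<lambda>c. poly c x) g"

lemma sec_pCons: "sec x (pCons a g) = pCons (poly a x) (sec x g)"
  unfolding sec_def by (simp add: map_poly_pCons)

lemma eval2_sec: "eval2 g (x, y) = poly (sec x g) y"
  by (induction g) (auto simp: eval2_pCons sec_pCons, simp add: eval2_def sec_def)

lemma eval2_pderiv: "eval2 (pderiv g) (x, y) = poly (pderiv (sec x g)) y"
proof (induction g)
  case 0 then show ?case by (simp add: eval2_def sec_def)
next
  case (pCons a g)
  have "eval2 (pderiv (pCons a g)) (x, y) = eval2 g (x, y) + y * eval2 (pderiv g) (x, y)"
    by (simp only: pderiv_pCons eval2_add eval2_pCons) simp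
  also have "\<dots> = poly (sec x g) y + y * poly (pderiv (sec x g)) y"
    using pCons(2) eval2_sec by simp
  also have "\<dots> = poly (pderiv (sec x (pCons a g))) y"
    by (simp add: sec_pCons pderiv_pCons)
  finally show ?case .
qed

lemma cont_eval2: "continuous_on UNIV (eval2 g)"
proof (induction g)
  case 0 then show ?case by (simp add: eval2_def)
next
  case (pCons a g)
  have "eval2 (pCons a g) = (\<lambda>p. poly a (fst p) + snd p * eval2 g p)"
    by (auto simp: eval2_pCons)
  then show ?case using pCons
    by (auto intro!: continuous_intros)
qed

lemma cont_eval2' [continuous_intros]:
  "continuous_on S h \<Longrightarrow> continuous_on S (\<lambda>x. eval2 g (h x))"
  using continuous_on_compose2[OF cont_eval2] by blast

lemma eval2_MVT:
  assumes "a < b"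
  shows "\<exists>z. a < z \<and> z < b \<and> eval2 g (x, b) - eval2 g (x, a) = (b - a) * eval2 (pderiv g) (x, z)"
  using poly_MVT[OF assms, of "sec x g"] by (simp only: eval2_sec[symmetric] eval2_pderiv[symmetric])

lemma common_zero_finite:
  fixes f :: "real poly poly"
  assumes irr: "irreducible f" and deg: "degree f \<noteq> 0"
  shows "finite {x. \<exists>y. eval2 f (x,y) = 0 \<and> eval2 (pderiv f) (x,y) = 0}"
proof -
  define S where "S = {m. m \<noteq> 0 \<and> (\<exists>u v. m = u * f + v * pderiv f)}"
  have fS: "f \<in> S"
  proof -
    have "f = 1 * f + 0 * pderiv f" by simp
    moreover have "f \<noteq> 0" using deg by auto
    ultimately show ?thesis unfolding S_def by blast
  qed
  obtain m where mS: "m \<in> S" and mmin: "\<And>m'. m' \<in> S \<Longrightarrow> degree m \<le> degree m'"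
    using ex_has_least_nat[of "\<lambda>m. m \<in> S" f degree] fS by blast
  from mS obtain u v where m0: "m \<noteq> 0" and muv: "m = u * f + v * pderiv f" unfolding S_def by blast
  have dv: "\<exists>a. a \<noteq> 0 \<and> m dvd [:a:] * h" if h: "\<exists>u1 v1. h = u1 * f + v1 * pderiv f" for h
  proof -
    obtain u1 v1 where h': "h = u1 * f + v1 * pderiv f" using h by blast
    define r where "r = pseudo_mod h m"
    obtain a q where a: "a \<noteq> 0" "smult a h = m * q + r"
      using pseudo_mod(1)[OF m0, of h] unfolding r_def by blast
    have rd: "r = 0 \<or> degree r < degree m" using pseudo_mod(2)[OF m0, of h] unfolding r_def by blast
    have "r = ([:a:] * u1 - q * u) * f + ([:a:] * v1 - q * v) * pderiv f"
    proof -
      have "r = smult a h - m * q" using a(2) by simp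
      also have "\<dots> = ([:a:] * u1 - q * u) * f + ([:a:] * v1 - q * v) * pderiv f"
        unfolding h' muv by (simp add: algebra_simps smult_add_right)
      finally show ?thesis .
    qed
    then have "r = 0"
      using rd mmin[of r] unfolding S_def by fastforce
    then have "m dvd [:a:] * h" using a(2) by (simp add: dvd_def)
    then show ?thesis using a(1) by blast
  qed
  obtain a where a: "a \<noteq> 0" "m dvd [:a:] * f"
    using dv[of f] by (metis add_0_right mult_1 mult_zero_left)
  obtain b where b: "b \<noteq> 0" "m dvd [:b:] * pderiv f"
    using dv[of "pderiv f"] by (metis add_0_left mult_1 mult_zero_left)
  have pf0: "pderiv f \<noteq> 0" using deg by (simp add: pderiv_eq_0_iff)
  have degm: "degree m = 0"
  proof (rule ccontr)
    assume dm: "degree m \<noteq> 0"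
    define pp where "pp = primitive_part m"
    have pp0: "pp \<noteq> 0" using m0 by (simp add: pp_def)
    have degpp: "degree pp \<noteq> 0" using dm by (simp add: pp_def degree_primitive_part)
    have ppnu: "\<not> is_unit pp" using degpp by (auto simp: is_unit_poly_iff)
    obtain p where p: "p dvd pp" "prime p" using prime_divisor_exists[OF pp0 ppnu] by blast
    have degp: "degree p \<noteq> 0"
    proof
      assume "degree p = 0"
      then obtain c where pc: "p = [:c:]" by (metis degree_eq_zeroE)
      have "c dvd content pp" using p(1) pc const_poly_dvd_iff_dvd_content by metis
      then have "is_unit c" using m0 by (simp add: pp_def)
      then have "is_unit p" using pc by (simp add: is_unit_const_poly_iff)
      then show False using p(2) by (simp add: prime_def prime_elem_def)
    qed
    have "pp dvd m" unfolding pp_def by (metis content_times_primitive_part dvd_smult dvd_refl)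
    then have pm: "p dvd m" using p(1) by (rule dvd_trans[rotated])
    have "p dvd [:a:] * f" using pm a(2) by (rule dvd_trans)
    then have "p dvd [:a:] \<or> p dvd f" using p(2) by (meson prime_dvd_mult_iff)
    moreover have "\<not> p dvd [:a:]"
      using dvd_imp_degree_le[of p "[:a:]"] a(1) degp by auto
    ultimately have pf: "p dvd f" by blast
    then obtain k where fk: "f = p * k" by (auto simp: dvd_def)
    have "\<not> is_unit p" using p(2) by (simp add: prime_def prime_elem_def)
    then have "is_unit k" using irr fk by (meson irreducibleD)
    then have "f dvd p" using fk by (metis dvd_mult_unit_iff dvd_refl mult.commute)
    then have "f dvd [:b:] * pderiv f" using pm b(2) by (meson dvd_trans)
    moreover have "prime_elem f" using irr by (simp add: prime_elem_iff_irreducible)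
    ultimately have "f dvd [:b:] \<or> f dvd pderiv f" by (meson prime_elem_dvd_mult_iff)
    moreover have "\<not> f dvd [:b:]" using dvd_imp_degree_le[of f "[:b:]"] b(1) deg by auto
    moreover have "\<not> f dvd pderiv f" using dvd_imp_degree_le[of f "pderiv f"] pf0 deg
      by (auto simp: degree_pderiv)
    ultimately show False by blast
  qed
  then obtain D where mD: "m = [:D:]" by (metis degree_eq_zeroE)
  have D0: "D \<noteq> 0" using m0 mD by simp
  have "{x. \<exists>y. eval2 f (x,y) = 0 \<and> eval2 (pderiv f) (x,y) = 0} \<subseteq> {x. poly D x = 0}"
  proof safe
    fix x y assume "eval2 f (x,y) = 0" "eval2 (pderiv f) (x,y) = 0"
    then have "eval2 m (x,y) = 0" unfolding muv by (simp add: eval2_add eval2_mult)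
    then show "poly D x = 0" unfolding mD by (simp add: eval2_def)
  qed
  then show ?thesis using poly_roots_finite[OF D0] finite_subset by blast
qed


lemma ivt_prod:
  fixes g :: "real \<Rightarrow> real"
  assumes "a \<le> b" "continuous_on {a..b} g" "g a * g b \<le> 0"
  shows "\<exists>z\<in>{a..b}. g z = 0"
proof (cases "g a \<le> 0")
  case True
  have "g b \<ge> 0 \<or> g a = 0"
  proof (cases "g a = 0")
    case False
    then have "g a < 0" using True by simp
    then show ?thesis using assms(3) by (smt (verit) mult_neg_neg)
  qed simp
  then show ?thesis
  proof
    assume "g b \<ge> 0" then show ?thesis using IVT'[of g a 0 b] True assms by auto
  next
    assume "g a = 0" then show ?thesis using assms(1) by auto
  qed
next
  case False
  then have "g b \<le> 0" using assms(3) by (simp add: mult_le_0_iff)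
  then show ?thesis using IVT2'[of g b 0 a] False assms by auto
qed

definition boxprop :: "real poly poly \<Rightarrow> real \<Rightarrow> real \<Rightarrow> real \<Rightarrow> real \<Rightarrow> bool" where
  "boxprop f s s' c d \<longleftrightarrow> (\<forall>x\<in>{s..s'}. \<exists>!y. y \<in> {c..d} \<and> eval2 f (x,y) = 0) \<and>
     (\<forall>x\<in>{s..s'}. \<forall>y\<in>{c..d}. eval2 f (x,y) = 0 \<longrightarrow> c < y \<and> y < d)"

lemma same_sign: "\<bar>a - b\<bar> < \<bar>b\<bar> \<Longrightarrow> (a::real) * b > 0"
proof -
  assume h: "\<bar>a - b\<bar> < \<bar>b\<bar>"
  consider "b > 0" | "b < 0" | "b = 0" by linarith
  then show ?thesis
  proof cases
    case 1 then have "a > 0" using h by (simp add: abs_less_iff)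
    then show ?thesis using 1 by simp
  next
    case 2 then have "a < 0" using h by (simp add: abs_less_iff)
    then show ?thesis using 2 by (simp add: mult_neg_neg)
  next
    case 3 then show ?thesis using h by simp
  qed
qed

lemma uniform_box:
  fixes f :: "real poly poly"
  assumes cpt: "compact (zero_set f)"
    and ns: "\<forall>x\<in>{c0..d0}. \<forall>y. eval2 f (x,y) = 0 \<longrightarrow> eval2 (pderiv f) (x,y) \<noteq> 0"
  shows "\<exists>\<delta>>0. \<forall>q\<in>zero_set f. fst q \<in> {c0..d0} \<longrightarrow>
            (\<exists>\<epsilon>>0. boxprop f (fst q - \<delta>) (fst q + \<delta>) (snd q - \<epsilon>) (snd q + \<epsilon>))"
proof -
  define X where "X = zero_set f"
  define K0 where "K0 = X \<inter> ({c0..d0} \<times> UNIV)"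
  define F where "F = eval2 f"
  define Fy where "Fy = eval2 (pderiv f)"
  have clX: "closed X" using cpt compact_imp_closed X_def by blast
  have cK0: "compact K0" unfolding K0_def
    using cpt X_def by (simp add: closed_Times compact_Int_closed)
  show ?thesis
  proof (cases "K0 = {}")
    case True
    then show ?thesis unfolding K0_def X_def by (auto intro!: exI[of _ 1])
  next
    case False
    have contFy: "continuous_on UNIV Fy" unfolding Fy_def by (rule cont_eval2)
    have contF: "continuous_on UNIV F" unfolding F_def by (rule cont_eval2)
    obtain k where k: "k \<in> K0" "\<And>p. p \<in> K0 \<Longrightarrow> \<bar>Fy k\<bar> \<le> \<bar>Fy p\<bar>"
      using continuous_attains_inf[OF cK0 False, of "\<lambda>p. \<bar>Fy p\<bar>"] contFy
      by (metis continuous_on_rabs continuous_on_subset top_greatest)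
    define m where "m = \<bar>Fy k\<bar>"
    have m0: "m > 0" using k(1) ns unfolding m_def K0_def X_def zero_set_def Fy_def
      by (cases k) auto
    have mle: "\<And>p. p \<in> K0 \<Longrightarrow> m \<le> \<bar>Fy p\<bar>" using k(2) m_def by blast
    obtain R where R: "\<And>p. p \<in> X \<Longrightarrow> norm p \<le> R"
      using compact_imp_bounded[OF cpt] unfolding bounded_iff X_def by blast
    define B where "B = cball (0::real\<times>real) (R+1)"
    have cB: "compact B" unfolding B_def by simp
    have ucFy: "uniformly_continuous_on B Fy"
      using compact_uniformly_continuous[OF continuous_on_subset[OF contFy] cB] by blast
    have ucF: "uniformly_continuous_on B F"
      using compact_uniformly_continuous[OF continuous_on_subset[OF contF] cB] by blast
    obtain r where r0: "r > 0" and r: "\<And>p p'. p \<in> B \<Longrightarrow> p' \<in> B \<Longrightarrow> dist p' p < r \<Longrightarrow> dist (Fy p') (Fy p) < m/2"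
      using ucFy m0 unfolding uniformly_continuous_on_def by (metis half_gt_zero)
    define r' where "r' = min r 1"
    have r'0: "r' > 0" using r0 r'_def by simp
    define \<epsilon> where "\<epsilon> = r'/2"
    have e0: "\<epsilon> > 0" using r'0 \<epsilon>_def by simp
    obtain \<delta>1 where d10: "\<delta>1 > 0" and d1: "\<And>p p'. p \<in> B \<Longrightarrow> p' \<in> B \<Longrightarrow> dist p' p < \<delta>1 \<Longrightarrow> dist (F p') (F p) < \<epsilon> * m/2"
      using ucF m0 e0 unfolding uniformly_continuous_on_def
      by (metis half_gt_zero mult_pos_pos times_divide_eq_right)
    define \<delta> where "\<delta> = min (\<delta>1/2) (r'/4)"
    have d0: "\<delta> > 0" using d10 r'0 \<delta>_def by simp
    have near: "dist (x,y) q < r'" if "q \<in> K0" "\<bar>x - fst q\<bar> \<le> \<delta>" "\<bar>y - snd q\<bar> \<le> \<epsilon>" for q x y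
    proof -
      have "dist (x,y) q = sqrt ((dist x (fst q))^2 + (dist y (snd q))^2)"
        by (metis dist_Pair_Pair prod.collapse)
      also have "\<dots> \<le> \<bar>x - fst q\<bar> + \<bar>y - snd q\<bar>"
        by (simp add: dist_real_def sqrt_sum_squares_le_sum_abs)
      also have "\<dots> < r'" using that \<delta>_def \<epsilon>_def r'0 by simp
      finally show ?thesis .
    qed
    have inB: "p \<in> B" if "q \<in> K0" "dist p q < r'" for p q
    proof -
      have "norm q \<le> R" using R that(1) K0_def by blast
      moreover have "norm p \<le> norm q + dist p q" by (metis dist_norm norm_triangle_sub add.commute)
      ultimately show ?thesis unfolding B_def using that(2) r'_def by (simp add: dist_norm)
    qed
    have Fybig: "\<bar>Fy p\<bar> > m/2" if "q \<in> K0" "dist p q < r'" for p q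
    proof -
      have "q \<in> B" using inB[OF that(1)] that(1) by (metis dist_self r'0)
      then have "dist (Fy p) (Fy q) < m/2" using r[of q p] inB[OF that] that(2) r'_def by simp
      moreover have "m \<le> \<bar>Fy q\<bar>" using mle that(1) by blast
      moreover have "\<bar>Fy q\<bar> \<le> \<bar>Fy p\<bar> + \<bar>Fy p - Fy q\<bar>"
        using abs_triangle_ineq4[of "Fy p" "Fy p - Fy q"] by simp
      ultimately show ?thesis unfolding dist_real_def by linarith
    qed
    have main: "boxprop f (fst q - \<delta>) (fst q + \<delta>) (snd q - \<epsilon>) (snd q + \<epsilon>)"
      if qK: "q \<in> K0" for q
    proof -
      obtain xq yq where q: "q = (xq, yq)" by (cases q)
      have Fq: "F (xq, yq) = 0" using qK unfolding q K0_def X_def zero_set_def F_def by simp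
      have Fyb: "\<bar>Fy (x,y)\<bar> > m/2" if "\<bar>x - xq\<bar> \<le> \<delta>" "\<bar>y - yq\<bar> \<le> \<epsilon>" for x y
        using Fybig[OF qK near[OF qK]] that q by simp
      have contv: "continuous_on S (\<lambda>y. G (x, y))" if "G = F \<or> G = Fy" for S x G
        using that unfolding F_def Fy_def by (auto intro!: continuous_intros)
      have uniq0: "False" if A: "\<bar>x - xq\<bar> \<le> \<delta>" "\<bar>y1 - yq\<bar> \<le> \<epsilon>" "\<bar>y2 - yq\<bar> \<le> \<epsilon>"
        "F (x,y1) = 0" "F (x,y2) = 0" "y1 < y2" for x y1 y2
      proof -
        obtain z where z: "y1 < z" "z < y2" "F (x, y2) - F (x, y1) = (y2 - y1) * Fy (x, z)"
          using eval2_MVT[of y1 y2 f x] A(6) unfolding F_def Fy_def by blast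
        have "\<bar>Fy (x,z)\<bar> > m/2" using Fyb[OF A(1)] z A(2,3) by simp
        moreover have "Fy (x, z) = 0" using z(3) A(4,5,6) by simp
        ultimately show False using m0 by simp
      qed
      have uniq: "y1 = y2" if "\<bar>x - xq\<bar> \<le> \<delta>" "\<bar>y1 - yq\<bar> \<le> \<epsilon>" "\<bar>y2 - yq\<bar> \<le> \<epsilon>"
        "F (x,y1) = 0" "F (x,y2) = 0" for x y1 y2
        using uniq0[OF that] uniq0[OF that(1,3,2,5,4)] by (meson linorder_neqE_linordered_idom)
      have endsq: "F (xq, yq + \<epsilon>) * F (xq, yq - \<epsilon>) < 0 \<and> \<bar>F (xq, yq + \<epsilon>)\<bar> > \<epsilon> * m / 2 \<and> \<bar>F (xq, yq - \<epsilon>)\<bar> > \<epsilon> * m / 2"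
      proof -
        obtain z1 where z1: "yq < z1" "z1 < yq + \<epsilon>" "F (xq, yq + \<epsilon>) - F (xq, yq) = \<epsilon> * Fy (xq, z1)"
          using eval2_MVT[of yq "yq + \<epsilon>" f xq] e0 unfolding F_def Fy_def by auto
        obtain z2 where z2: "yq - \<epsilon> < z2" "z2 < yq" "F (xq, yq) - F (xq, yq - \<epsilon>) = \<epsilon> * Fy (xq, z2)"
          using eval2_MVT[of "yq - \<epsilon>" yq f xq] e0 unfolding F_def Fy_def by auto
        have b1: "\<bar>Fy (xq, z1)\<bar> > m/2" using Fyb[of xq z1] z1 d0 by simp
        have b2: "\<bar>Fy (xq, z2)\<bar> > m/2" using Fyb[of xq z2] z2 d0 by simp
        have pos: "Fy (xq, z2) * Fy (xq, z1) > 0"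
        proof (rule ccontr)
          assume "\<not> Fy (xq, z2) * Fy (xq, z1) > 0"
          then obtain z where "z \<in> {z2..z1}" "Fy (xq, z) = 0"
            using ivt_prod[of z2 z1 "\<lambda>y. Fy (xq, y)"] contv[of Fy] z1 z2 by force
          then show False using Fyb[of xq z] z1 z2 d0 m0 by (auto simp: abs_le_iff)
        qed
        have "F (xq, yq + \<epsilon>) = \<epsilon> * Fy (xq, z1)" "F (xq, yq - \<epsilon>) = - \<epsilon> * Fy (xq, z2)"
          using z1 z2 Fq by simp_all
        note P = this
        have "F (xq, yq + \<epsilon>) * F (xq, yq - \<epsilon>) = - (\<epsilon> * \<epsilon>) * (Fy (xq, z2) * Fy (xq, z1))"
          using P by (simp add: algebra_simps)
        moreover have "(\<epsilon> * \<epsilon>) * (Fy (xq, z2) * Fy (xq, z1)) > 0" using e0 pos by simp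
        moreover have "\<bar>F (xq, yq + \<epsilon>)\<bar> = \<epsilon> * \<bar>Fy (xq, z1)\<bar>" using P e0 by (simp add: abs_mult)
        moreover have "\<bar>F (xq, yq - \<epsilon>)\<bar> = \<epsilon> * \<bar>Fy (xq, z2)\<bar>" using P e0 by (simp add: abs_mult)
        moreover have "\<epsilon> * \<bar>Fy (xq, z1)\<bar> > \<epsilon> * (m/2)" using b1 e0 by simp
        moreover have "\<epsilon> * \<bar>Fy (xq, z2)\<bar> > \<epsilon> * (m/2)" using b2 e0 by simp
        ultimately show ?thesis by simp
      qed
      have endsx: "F (x, yq + \<epsilon>) * F (x, yq - \<epsilon>) < 0" if "\<bar>x - xq\<bar> \<le> \<delta>" for x
      proof -
        have cl: "dist (x, y) (xq, y) < \<delta>1" "(x,y) \<in> B" "(xq, y) \<in> B" if "\<bar>y - yq\<bar> \<le> \<epsilon>" for y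
        proof -
          show "dist (x, y) (xq, y) < \<delta>1" using \<open>\<bar>x - xq\<bar> \<le> \<delta>\<close> \<delta>_def d10
            by (simp add: dist_Pair_Pair dist_real_def)
          show "(x,y) \<in> B" using inB[OF qK near[OF qK]] that \<open>\<bar>x - xq\<bar> \<le> \<delta>\<close> q by simp
          show "(xq,y) \<in> B" using inB[OF qK near[OF qK]] that d0 q by simp
        qed
        have "\<bar>F (x, yq + \<epsilon>) - F (xq, yq + \<epsilon>)\<bar> < \<epsilon> * m / 2"
          using d1[OF cl(3) cl(2) cl(1)] e0 by (simp add: dist_real_def)
        then have "F (x, yq + \<epsilon>) * F (xq, yq + \<epsilon>) > 0" using endsq same_sign by force
        moreover have "\<bar>F (x, yq - \<epsilon>) - F (xq, yq - \<epsilon>)\<bar> < \<epsilon> * m / 2"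
          using d1[OF cl(3) cl(2) cl(1)] e0 by (simp add: dist_real_def)
        then have "F (x, yq - \<epsilon>) * F (xq, yq - \<epsilon>) > 0" using endsq same_sign by force
        moreover have "F (xq, yq + \<epsilon>) * F (xq, yq - \<epsilon>) < 0" using endsq by blast
        ultimately have "(F (x, yq + \<epsilon>) * F (x, yq - \<epsilon>)) * (F (xq, yq + \<epsilon>) * F (xq, yq - \<epsilon>)) > 0"
          by (metis (no_types, lifting) mult.assoc mult.left_commute mult_pos_pos)
        with \<open>F (xq, yq + \<epsilon>) * F (xq, yq - \<epsilon>) < 0\<close> show ?thesis
          by (meson mult_less_0_iff not_less_iff_gr_or_eq zero_less_mult_iff)
      qed
      show ?thesis unfolding boxprop_def
      proof (intro conjI ballI impI)
        fix x assume x: "x \<in> {fst q - \<delta>..fst q + \<delta>}"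
        then have xd: "\<bar>x - xq\<bar> \<le> \<delta>" using q by auto
        obtain y where y: "y \<in> {yq - \<epsilon>..yq + \<epsilon>}" "F (x, y) = 0"
          using ivt_prod[of "yq - \<epsilon>" "yq + \<epsilon>" "\<lambda>y. F (x, y)"] contv[of F] e0 endsx[OF xd]
          by (auto simp: mult.commute)
        show "\<exists>!y. y \<in> {snd q - \<epsilon>..snd q + \<epsilon>} \<and> eval2 f (x, y) = 0"
        proof (rule ex1I[of _ y])
          show "y \<in> {snd q - \<epsilon>..snd q + \<epsilon>} \<and> eval2 f (x, y) = 0" using y q F_def by simp
          fix y' assume "y' \<in> {snd q - \<epsilon>..snd q + \<epsilon>} \<and> eval2 f (x, y') = 0"
          then show "y' = y" using uniq[OF xd, of y' y] y q F_def by (auto simp: abs_le_iff)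
        qed
      next
        fix x y assume x: "x \<in> {fst q - \<delta>..fst q + \<delta>}" and y: "y \<in> {snd q - \<epsilon>..snd q + \<epsilon>}"
          and Fz: "eval2 f (x, y) = 0"
        have xd: "\<bar>x - xq\<bar> \<le> \<delta>" using x q by auto
        have "y \<noteq> yq + \<epsilon>" "y \<noteq> yq - \<epsilon>" using endsx[OF xd] Fz F_def by auto
        then show "snd q - \<epsilon> < y" "y < snd q + \<epsilon>" using y q by auto
      qed
    qed
    have "q \<in> K0" if "q \<in> zero_set f" "fst q \<in> {c0..d0}" for q
      using that unfolding K0_def X_def by (cases q) auto
    then show ?thesis using main e0 d0 by blast
  qed
qed


lemma sa_int: "S \<in> semialgebraic \<Longrightarrow> T \<in> semialgebraic \<Longrightarrow> S \<inter> T \<in> semialgebraic"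
proof -
  assume "S \<in> semialgebraic" "T \<in> semialgebraic"
  then have "- (- S \<union> - T) \<in> semialgebraic" by (intro sa_compl sa_union)
  then show ?thesis by simp
qed

lemma eval2_xlin: "eval2 [:[:a, b:]:] p = a + b * fst p"
  by (simp add: eval2_def)
lemma eval2_ylin: "eval2 [:[:a:], 1:] p = a + snd p"
  by (cases p) (simp add: eval2_def)

lemma sa_xgt: "{p. a < fst p} \<in> semialgebraic"
proof -
  have "{p. 0 < eval2 [:[:-a, 1:]:] p} \<in> semialgebraic" by (rule sa_pos)
  moreover have "{p. 0 < eval2 [:[:-a, 1:]:] p} = {p. a < fst p}" by (auto simp: eval2_xlin)
  ultimately show ?thesis by simp
qed
lemma sa_xlt: "{p. fst p < b} \<in> semialgebraic"
proof -
  have "{p. 0 < eval2 [:[:b, -1:]:] p} \<in> semialgebraic" by (rule sa_pos)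
  moreover have "{p. 0 < eval2 [:[:b, -1:]:] p} = {p. fst p < b}" by (auto simp: eval2_xlin)
  ultimately show ?thesis by simp
qed
lemma sa_ygt: "{p. a < snd p} \<in> semialgebraic"
proof -
  have "{p. 0 < eval2 [:[:-a:], 1:] p} \<in> semialgebraic" by (rule sa_pos)
  moreover have "{p. 0 < eval2 [:[:-a:], 1:] p} = {p. a < snd p}" by (auto simp: eval2_ylin)
  ultimately show ?thesis by simp
qed
lemma sa_ylt: "{p. snd p < b} \<in> semialgebraic"
proof -
  have "{p. 0 < eval2 (- [:[:-b:], 1:]) p} \<in> semialgebraic" by (rule sa_pos)
  moreover have "eval2 (- [:[:-b:], 1:]) p = b - snd p" for p
    using eval2_diff[of 0 "[:[:-b:], 1:]" p] by (simp add: eval2_ylin eval2_def)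
  then have "{p. 0 < eval2 (- [:[:-b:], 1:]) p} = {p. snd p < b}" by auto
  ultimately show ?thesis by simp
qed
lemma sa_xeq: "{p. fst p = a} \<in> semialgebraic"
proof -
  have "{p. eval2 [:[:-a, 1:]:] p = 0} \<in> semialgebraic" by (rule sa_zero)
  moreover have "{p. eval2 [:[:-a, 1:]:] p = 0} = {p. fst p = a}" by (auto simp: eval2_xlin)
  ultimately show ?thesis by simp
qed
lemma sa_yeq: "{p. snd p = a} \<in> semialgebraic"
proof -
  have "{p. eval2 [:[:-a:], 1:] p = 0} \<in> semialgebraic" by (rule sa_zero)
  moreover have "{p. eval2 [:[:-a:], 1:] p = 0} = {p. snd p = a}" by (auto simp: eval2_ylin)
  ultimately show ?thesis by simp
qed

lemma sa_singleton: "{p} \<in> semialgebraic"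
proof -
  have "{q. fst q = fst p} \<inter> {q. snd q = snd p} \<in> semialgebraic" by (intro sa_int sa_xeq sa_yeq)
  moreover have "{q. fst q = fst p} \<inter> {q. snd q = snd p} = {p}" by (auto simp: prod_eq_iff)
  ultimately show ?thesis by simp
qed

lemma sa_cell: "zero_set f \<inter> ({s<..<s'} \<times> {c<..<d}) \<in> semialgebraic"
proof -
  have "zero_set f \<inter> {p. s < fst p} \<inter> {p. fst p < s'} \<inter> {p. c < snd p} \<inter> {p. snd p < d} \<in> semialgebraic"
    unfolding zero_set_def by (intro sa_int sa_zero sa_xgt sa_xlt sa_ygt sa_ylt)
  moreover have "zero_set f \<inter> {p. s < fst p} \<inter> {p. fst p < s'} \<inter> {p. c < snd p} \<inter> {p. snd p < d}
      = zero_set f \<inter> ({s<..<s'} \<times> {c<..<d})" by auto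
  ultimately show ?thesis by simp
qed

section \<open>Graphs in good boxes\<close>

lemma closed_zero_set: "closed (zero_set f)"
proof -
  have "closed (eval2 f -` {0})"
    by (rule continuous_closed_vimage) (auto simp: continuous_on_eq_continuous_within cont_eval2[unfolded continuous_on_eq_continuous_within])
  moreover have "eval2 f -` {0} = zero_set f" by (auto simp: zero_set_def)
  ultimately show ?thesis by simp
qed

definition phi :: "real poly poly \<Rightarrow> real \<Rightarrow> real \<Rightarrow> real \<Rightarrow> real" where
  "phi f c d x = (THE y. y \<in> {c..d} \<and> eval2 f (x,y) = 0)"

lemma boxprop_mono: "boxprop f s1 s1' c d \<Longrightarrow> s1 \<le> s \<Longrightarrow> s' \<le> s1' \<Longrightarrow> boxprop f s s' c d"
  unfolding boxprop_def by auto

lemma phi_prop: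
  assumes "boxprop f s s' c d" "x \<in> {s..s'}"
  shows "phi f c d x \<in> {c<..<d}" "eval2 f (x, phi f c d x) = 0"
proof -
  have ex: "\<exists>!y. y \<in> {c..d} \<and> eval2 f (x,y) = 0" using assms unfolding boxprop_def by blast
  then have *: "phi f c d x \<in> {c..d} \<and> eval2 f (x, phi f c d x) = 0"
    unfolding phi_def by (rule theI')
  then show "eval2 f (x, phi f c d x) = 0" by blast
  show "phi f c d x \<in> {c<..<d}" using * assms unfolding boxprop_def by auto
qed

lemma phi_unique:
  assumes "boxprop f s s' c d" "x \<in> {s..s'}" "y \<in> {c..d}" "eval2 f (x,y) = 0"
  shows "y = phi f c d x"
proof -
  have ex: "\<exists>!y. y \<in> {c..d} \<and> eval2 f (x,y) = 0" using assms unfolding boxprop_def by blast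
  moreover have "phi f c d x \<in> {c..d}" "eval2 f (x, phi f c d x) = 0"
    using phi_prop[OF assms(1,2)] by auto
  ultimately show ?thesis using assms(3,4) by blast
qed

lemma graph_eq:
  assumes "boxprop f s s' c d" "T \<subseteq> {s..s'}"
  shows "zero_set f \<inter> (T \<times> {c..d}) = (\<lambda>x. (x, phi f c d x)) ` T"
    and "zero_set f \<inter> (T \<times> {c<..<d}) = (\<lambda>x. (x, phi f c d x)) ` T"
proof -
  show 1: "zero_set f \<inter> (T \<times> {c..d}) = (\<lambda>x. (x, phi f c d x)) ` T"
  proof safe
    fix x y assume "(x,y) \<in> zero_set f" "x \<in> T" "y \<in> {c..d}"
    then show "(x, y) \<in> (\<lambda>x. (x, phi f c d x)) ` T"
      using phi_unique[OF assms(1), of x y] assms(2) by (auto simp: zero_set_def)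
  next
    fix x assume "x \<in> T"
    then show "(x, phi f c d x) \<in> zero_set f" "phi f c d x \<in> {c..d}"
      using phi_prop[OF assms(1), of x] assms(2) by (auto simp: zero_set_def)
  qed
  show "zero_set f \<inter> (T \<times> {c<..<d}) = (\<lambda>x. (x, phi f c d x)) ` T"
  proof -
    have "zero_set f \<inter> (T \<times> {c<..<d}) \<subseteq> zero_set f \<inter> (T \<times> {c..d})" by auto
    moreover have "(\<lambda>x. (x, phi f c d x)) ` T \<subseteq> zero_set f \<inter> (T \<times> {c<..<d})"
      using phi_prop[OF assms(1)] assms(2) by (auto simp: zero_set_def)
    ultimately show ?thesis using 1 by blast
  qed
qed

lemma phi_cont:
  assumes "boxprop f s s' c d"
  shows "continuous_on {s..s'} (phi f c d)"
proof -
  have fim: "phi f c d \<in> {s..s'} \<rightarrow> {c..d}"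
  proof
    fix x assume "x \<in> {s..s'}"
    then have "phi f c d x \<in> {c<..<d}" using phi_prop(1)[OF assms] by blast
    then show "phi f c d x \<in> {c..d}" by auto
  qed
  have "closedin (top_of_set ({s..s'} \<times> {c..d})) ((\<lambda>x. (x, phi f c d x)) ` {s..s'})"
  proof -
    have "(\<lambda>x. (x, phi f c d x)) ` {s..s'} = ({s..s'} \<times> {c..d}) \<inter> zero_set f"
      using graph_eq(1)[OF assms, of "{s..s'}"] by auto
    then show ?thesis using closed_zero_set by (metis closedin_closed_Int)
  qed
  then show ?thesis using continuous_closed_graph_eq[OF _ fim] by simp
qed

lemma graph_connected:
  assumes "boxprop f s s' c d" "T \<subseteq> {s..s'}" "is_interval T"
  shows "connected ((\<lambda>x. (x, phi f c d x)) ` T)"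
proof -
  have "continuous_on T (\<lambda>x. (x, phi f c d x))"
    using continuous_on_subset[OF phi_cont[OF assms(1)] assms(2)] by (auto intro!: continuous_intros)
  moreover have "connected T" using assms(3) by (simp add: is_interval_connected)
  ultimately show ?thesis using connected_continuous_image by blast
qed

lemma cell_homeo:
  assumes "boxprop f s s' c d" "s < s'"
  shows "zero_set f \<inter> ({s<..<s'} \<times> {c<..<d}) homeomorphic {0<..<(1::real)}"
proof -
  let ?g = "\<lambda>x. (x, phi f c d x)"
  have eq: "zero_set f \<inter> ({s<..<s'} \<times> {c<..<d}) = ?g ` {s<..<s'}"
    using graph_eq(2)[OF assms(1), of "{s<..<s'}"] by (simp add: subset_iff)
  have "homeomorphism {s<..<s'} (?g ` {s<..<s'}) ?g fst"
  proof (rule homeomorphismI)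
    show "continuous_on {s<..<s'} ?g"
      using continuous_on_subset[OF phi_cont[OF assms(1)], of "{s<..<s'}"]
      by (auto intro!: continuous_intros simp: subset_iff)
    show "continuous_on (?g ` {s<..<s'}) fst" by (auto intro!: continuous_intros)
  qed auto
  then have h1: "{s<..<s'} homeomorphic (zero_set f \<inter> ({s<..<s'} \<times> {c<..<d}))"
    unfolding eq homeomorphic_def by blast
  have "{0<..<(1::real)} homeomorphic ((\<lambda>x. s + (s' - s) *\<^sub>R x) ` {0<..<1})"
    using assms(2) by (intro homeomorphic_affinity) simp
  moreover have "(\<lambda>x. s + (s' - s) *\<^sub>R x) ` {0<..<1} = {s<..<s'}"
  proof -
    have "(\<lambda>x. s + (s' - s) * x) ` {0<..<1} = {s<..<s'}"
    proof safe
      fix y assume y: "y \<in> {s<..<s'}"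
      then have "(y - s) / (s' - s) \<in> {0<..<1}" "y = s + (s' - s) * ((y - s) / (s' - s))"
        using assms(2) by (auto simp: field_simps)
      then show "y \<in> (\<lambda>x. s + (s' - s) * x) ` {0<..<1}" by blast
    next
      fix x :: real assume "x \<in> {0<..<1}"
      then have x: "0 < x" "x < 1" by auto
      have "0 < (s' - s) * x" using x assms(2) by simp
      moreover have "(s' - s) * x < (s' - s) * 1" using x assms(2) by (intro mult_strict_left_mono) auto
      ultimately show "s + (s' - s) * x \<in> {s<..<s'}" by simp
    qed
    then show ?thesis by simp
  qed
  ultimately have "{0<..<(1::real)} homeomorphic {s<..<s'}" by simp
  then show ?thesis using h1 homeomorphic_sym homeomorphic_trans by blast
qed


section \<open>Components of a compact connected set inside a cell\<close>

lemma clopen_sub: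
  assumes "connected C" "C \<subseteq> S" "openin (top_of_set S) T" "closedin (top_of_set S) T" "C \<inter> T \<noteq> {}"
  shows "C \<subseteq> T"
proof -
  obtain U where U: "open U" "T = S \<inter> U" using assms(3) by (auto simp: openin_open)
  obtain V where V: "closed V" "T = S \<inter> V" using assms(4) by (auto simp: closedin_closed)
  have "C \<inter> T = C \<inter> U" using U assms(2) by blast
  then have o: "openin (top_of_set C) (C \<inter> T)" using U(1) by (simp add: openin_open_Int)
  have "C \<inter> T = C \<inter> V" using V assms(2) by blast
  then have c: "closedin (top_of_set C) (C \<inter> T)" using V(1) by (simp add: closedin_closed_Int)
  have "C \<inter> T = {} \<or> C \<inter> T = C" using assms(1) o c unfolding connected_clopen by blast
  then show ?thesis using assms(5) by blast
qed

lemma subsingleton_finite: "(\<And>a b. a \<in> A \<Longrightarrow> b \<in> A \<Longrightarrow> a = b) \<Longrightarrow> finite A"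
proof (cases "A = {}")
  case False
  assume h: "\<And>a b. a \<in> A \<Longrightarrow> b \<in> A \<Longrightarrow> a = b"
  obtain a where "a \<in> A" using False by blast
  then have "A \<subseteq> {a}" using h by blast
  then show ?thesis using finite_subset by blast
qed simp

lemma comp_finite:
  assumes bp: "boxprop f s s' c d" and ss: "s < s'"
    and K: "connected K" "K \<subseteq> zero_set f"
  shows "finite (components (K \<inter> (zero_set f \<inter> ({s<..<s'} \<times> {c<..<d}))))"
proof -
  define C where "C = zero_set f \<inter> ({s<..<s'} \<times> {c<..<d})"
  define g where "g = (\<lambda>x. (x, phi f c d x))"
  have Ceq: "C = g ` {s<..<s'}" unfolding C_def g_def
    using graph_eq(2)[OF bp, of "{s<..<s'}"] by (simp add: subset_iff)
  have gC: "g x \<in> C" if "x \<in> {s<..<s'}" for x using Ceq that by blast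
  show ?thesis
  proof (cases "K \<subseteq> C")
    case True
    then have "K \<inter> C = K" by blast
    moreover have "finite (components K)"
    proof (cases "K = {}")
      case False
      then have "components K = {K}" using K(1) components_eq_sing_iff by blast
      then show ?thesis by simp
    qed simp
    ultimately show ?thesis unfolding C_def by simp
  next
    case False
    define Lt where "Lt W \<longleftrightarrow> (\<exists>x\<in>{s<..<s'}. g ` {s<..x} \<subseteq> W)" for W
    define Rt where "Rt W \<longleftrightarrow> (\<exists>x\<in>{s<..<s'}. g ` {x..<s'} \<subseteq> W)" for W
    have LR: "Lt W \<or> Rt W" if W: "W \<in> components (K \<inter> C)" for W
    proof -
      obtain w where w: "w \<in> W" using W in_components_nonempty by blast
      have wKC: "w \<in> K \<inter> C" using W w in_components_subset by blast
      then obtain xw where xw: "xw \<in> {s<..<s'}" "w = g xw" using Ceq by blast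
      consider (L) "\<forall>u\<in>{s<..<xw}. g u \<in> K" | (R) "\<forall>v\<in>{xw<..<s'}. g v \<in> K"
        | (M) u v where "u \<in> {s<..<xw}" "g u \<notin> K" "v \<in> {xw<..<s'}" "g v \<notin> K" by blast
      then show ?thesis
      proof cases
        case L
        have sub: "g ` {s<..xw} \<subseteq> K \<inter> C"
        proof
          fix p assume "p \<in> g ` {s<..xw}"
          then obtain u where u: "u \<in> {s<..xw}" "p = g u" by blast
          show "p \<in> K \<inter> C"
          proof (cases "u = xw")
            case True then show ?thesis using wKC xw u by simp
          next
            case False
            then have "u \<in> {s<..<xw}" using u by auto
            then show ?thesis using L u gC xw by auto
          qed
        qed
        have "connected (g ` {s<..xw})" unfolding g_def
          using xw by (intro graph_connected[OF bp]) (auto simp: is_interval_def)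
        moreover have "W \<inter> g ` {s<..xw} \<noteq> {}" using w xw by auto
        ultimately have "g ` {s<..xw} \<subseteq> W" using components_maximal[OF W _ sub] by blast
        then show ?thesis unfolding Lt_def using xw by blast
      next
        case R
        have sub: "g ` {xw..<s'} \<subseteq> K \<inter> C"
        proof
          fix p assume "p \<in> g ` {xw..<s'}"
          then obtain u where u: "u \<in> {xw..<s'}" "p = g u" by blast
          show "p \<in> K \<inter> C"
          proof (cases "u = xw")
            case True then show ?thesis using wKC xw u by simp
          next
            case False
            then have "u \<in> {xw<..<s'}" using u by auto
            then show ?thesis using R u gC xw by auto
          qed
        qed
        have "connected (g ` {xw..<s'})" unfolding g_def
          using xw by (intro graph_connected[OF bp]) (auto simp: is_interval_def)
        moreover have "W \<inter> g ` {xw..<s'} \<noteq> {}" using w xw by auto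
        ultimately have "g ` {xw..<s'} \<subseteq> W" using components_maximal[OF W _ sub] by blast
        then show ?thesis unfolding Rt_def using xw by blast
      next
        case M
        define T where "T = K \<inter> ({u<..<v} \<times> {c<..<d})"
        have o: "openin (top_of_set K) T" unfolding T_def
          by (intro openin_open_Int) (simp add: open_Times)
        have Teq: "T = K \<inter> ({u..v} \<times> {c..d})"
        proof
          show "T \<subseteq> K \<inter> ({u..v} \<times> {c..d})" unfolding T_def by auto
          show "K \<inter> ({u..v} \<times> {c..d}) \<subseteq> T"
          proof
            fix p assume p: "p \<in> K \<inter> ({u..v} \<times> {c..d})"
            have uv: "{u..v} \<subseteq> {s..s'}" using M xw by auto
            have "p \<in> zero_set f \<inter> ({u..v} \<times> {c..d})" using p K(2) by blast
            then have "p \<in> g ` {u..v}" using graph_eq(1)[OF bp uv] unfolding g_def by blast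
            then obtain a where a: "a \<in> {u..v}" "p = g a" by blast
            have "a \<noteq> u" "a \<noteq> v" using a p M by auto
            then have a2: "a \<in> {u<..<v}" using a by auto
            have "phi f c d a \<in> {c<..<d}" using phi_prop(1)[OF bp] a2 uv by auto
            then show "p \<in> T" unfolding T_def using p a a2 g_def by auto
          qed
        qed
        have cl: "closedin (top_of_set K) T" unfolding Teq
          by (intro closedin_closed_Int) (simp add: closed_Times)
        have "w \<in> T"
        proof -
          have "phi f c d xw \<in> {c<..<d}" using phi_prop(1)[OF bp] xw by auto
          then show ?thesis unfolding T_def using wKC xw M g_def by auto
        qed
        then have "T = K" using K(1) o cl unfolding connected_clopen by blast
        moreover have "T \<subseteq> C" unfolding T_def C_def using K(2) M xw by auto
        ultimately show ?thesis using False by blast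
      qed
    qed
    have Lu: "W1 = W2" if A: "W1 \<in> components (K \<inter> C)" "W2 \<in> components (K \<inter> C)" "Lt W1" "Lt W2" for W1 W2
    proof -
      obtain x1 x2 where x: "x1 \<in> {s<..<s'}" "g ` {s<..x1} \<subseteq> W1" "x2 \<in> {s<..<s'}" "g ` {s<..x2} \<subseteq> W2"
        using A unfolding Lt_def by blast
      define t where "t = (s + min x1 x2) / 2"
      have "t \<in> {s<..x1}" "t \<in> {s<..x2}" using x unfolding t_def by auto
      then have "g t \<in> W1 \<inter> W2" using x by blast
      then show ?thesis using components_nonoverlap[OF A(1,2)] by blast
    qed
    have Ru: "W1 = W2" if A: "W1 \<in> components (K \<inter> C)" "W2 \<in> components (K \<inter> C)" "Rt W1" "Rt W2" for W1 W2
    proof -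
      obtain x1 x2 where x: "x1 \<in> {s<..<s'}" "g ` {x1..<s'} \<subseteq> W1" "x2 \<in> {s<..<s'}" "g ` {x2..<s'} \<subseteq> W2"
        using A unfolding Rt_def by blast
      define t where "t = (s' + max x1 x2) / 2"
      have "t \<in> {x1..<s'}" "t \<in> {x2..<s'}" using x unfolding t_def by auto
      then have "g t \<in> W1 \<inter> W2" using x by blast
      then show ?thesis using components_nonoverlap[OF A(1,2)] by blast
    qed
    have "finite {W \<in> components (K \<inter> C). Lt W}" by (rule subsingleton_finite) (use Lu in blast)
    moreover have "finite {W \<in> components (K \<inter> C). Rt W}" by (rule subsingleton_finite) (use Ru in blast)
    moreover have "components (K \<inter> C) \<subseteq> {W \<in> components (K \<inter> C). Lt W} \<union> {W \<in> components (K \<inter> C). Rt W}"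
      using LR by blast
    ultimately show ?thesis unfolding C_def[symmetric] by (meson finite_UnI finite_subset)
  qed
qed


section \<open>Dyadic intervals\<close>

definition lo :: "nat \<Rightarrow> int \<Rightarrow> real" where "lo n k = real_of_int k / 2^n"
definition hi :: "nat \<Rightarrow> int \<Rightarrow> real" where "hi n k = (real_of_int k + 1) / 2^n"
definition DI :: "nat \<Rightarrow> int \<Rightarrow> real set" where "DI n k = {lo n k<..<hi n k}"

lemma lo_hi: "lo n k < hi n k" "hi n k - lo n k = 1 / 2^n"
  unfolding lo_def hi_def by (auto simp: divide_strict_right_mono diff_divide_distrib[symmetric])

lemma DI_iff: "x \<in> DI n k \<longleftrightarrow> real_of_int k < x * 2^n \<and> x * 2^n < real_of_int k + 1"
  unfolding DI_def lo_def hi_def by (auto simp: divide_less_eq less_divide_eq)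

lemma DI_floor: "x \<in> DI n k \<Longrightarrow> k = \<lfloor>x * 2^n\<rfloor>"
  unfolding DI_iff by (metis floor_unique less_eq_real_def)

lemma DI_nest:
  assumes "n \<le> n'" "z \<in> DI n k" "z \<in> DI n' k'"
  shows "DI n' k' \<subseteq> DI n k"
proof
  define d where "d = n' - n"
  have e: "(2::real)^n' = 2^n * 2^d" using assms(1) by (simp add: d_def flip: power_add)
  have Q: "real_of_int ((2::int)^d) = 2^d" by simp
  have Qp: "(0::real) < 2^d" by simp
  from assms(2,3) have z: "k < z*2^n" "z*2^n < k+1" "k' < (z*2^n)*2^d" "(z*2^n)*2^d < k'+1"
    by (auto simp: DI_iff e mult.assoc)
  have "real_of_int k * 2^d < (z*2^n)*2^d" using z(1) Qp by (rule mult_strict_right_mono)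
  then have "real_of_int k * 2^d < real_of_int k' + 1" using z(4) by linarith
  then have "real_of_int (k * 2^d) < real_of_int (k' + 1)" by simp
  then have k1: "k * 2^d \<le> k'" by linarith
  have "(z*2^n)*2^d < (real_of_int k + 1) * 2^d" using z(2) Qp by (simp add: mult_strict_right_mono)
  then have "real_of_int k' < (real_of_int k + 1) * 2^d" using z(3) by linarith
  then have "real_of_int k' < real_of_int ((k + 1) * 2^d)" by simp
  then have k2: "k' + 1 \<le> (k + 1) * 2^d" by linarith
  fix y assume "y \<in> DI n' k'"
  then have y: "k' < (y*2^n)*2^d" "(y*2^n)*2^d < k'+1" by (auto simp: DI_iff e mult.assoc)
  have "real_of_int (k * 2^d) \<le> real_of_int k'" using k1 by (simp only: of_int_le_iff)
  then have "real_of_int k * 2^d \<le> real_of_int k'" by simp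
  then have "real_of_int k * 2^d < (y*2^n)*2^d" using y(1) by linarith
  then have a: "real_of_int k < y*2^n" using Qp by (simp add: mult_less_cancel_right_pos)
  have "real_of_int (k' + 1) \<le> real_of_int ((k + 1) * 2^d)" using k2 by (simp only: of_int_le_iff)
  then have "real_of_int k' + 1 \<le> (real_of_int k + 1) * 2^d" by simp
  then have "(y*2^n)*2^d < (real_of_int k + 1) * 2^d" using y(2) by linarith
  then have b: "y*2^n < real_of_int k + 1" using Qp by (simp add: mult_less_cancel_right_pos)
  show "y \<in> DI n k" using a b by (simp add: DI_iff)
qed

definition finei :: "real poly poly \<Rightarrow> real \<Rightarrow> real \<Rightarrow> bool" where
  "finei f s s' \<longleftrightarrow> (\<forall>q\<in>zero_set f. s < fst q \<and> fst q < s' \<longrightarrow>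
      (\<exists>\<epsilon>>0. boxprop f s s' (snd q - \<epsilon>) (snd q + \<epsilon>)))"

definition goodI :: "real poly poly \<Rightarrow> (nat \<times> int) set" where
  "goodI f = {(n,k). finei f (lo n k) (hi n k) \<and>
     (\<forall>m<n. \<forall>k'. DI n k \<subseteq> DI m k' \<longrightarrow> \<not> finei f (lo m k') (hi m k'))}"

lemma goodI_disj_aux:
  assumes "(n,k) \<in> goodI f" "(n',k') \<in> goodI f" "z \<in> DI n k" "z \<in> DI n' k'" "n \<le> n'"
  shows "(n,k) = (n',k')"
proof -
  have sub: "DI n' k' \<subseteq> DI n k" using DI_nest[OF assms(5,3,4)] .
  have "n = n'"
  proof (rule ccontr)
    assume "n \<noteq> n'"
    then have "n < n'" using assms(5) by simp
    then show False using assms(1,2) sub unfolding goodI_def by blast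
  qed
  moreover have "k = k'" using DI_floor[OF assms(3)] DI_floor[OF assms(4)] \<open>n = n'\<close> by simp
  ultimately show ?thesis by simp
qed

lemma goodI_disj:
  assumes "(n,k) \<in> goodI f" "(n',k') \<in> goodI f" "z \<in> DI n k" "z \<in> DI n' k'"
  shows "(n,k) = (n',k')"
proof (cases "n \<le> n'")
  case True then show ?thesis using goodI_disj_aux[OF assms] by blast
next
  case False then show ?thesis using goodI_disj_aux[OF assms(2,1,4,3)] by simp
qed

definition dyadics :: "real set" where "dyadics = (\<lambda>(n::nat,k::int). real_of_int k / 2^n) ` UNIV"

lemma countable_dyadics: "countable dyadics"
  unfolding dyadics_def by simp

lemma nondyadic_DI:
  assumes "x \<notin> dyadics"
  shows "x \<in> DI m \<lfloor>x * 2^m\<rfloor>"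
proof -
  have "x * 2^m \<noteq> real_of_int \<lfloor>x * 2^m\<rfloor>"
  proof
    assume "x * 2^m = real_of_int \<lfloor>x * 2^m\<rfloor>"
    then have "x = real_of_int \<lfloor>x * 2^m\<rfloor> / 2^m" by (simp add: eq_divide_eq)
    then have "x \<in> dyadics" unfolding dyadics_def by (metis (no_types, lifting) case_prod_conv rangeI)
    then show False using assms by blast
  qed
  then show ?thesis unfolding DI_iff using floor_correct[of "x * 2^m"] by (auto simp: less_le)
qed

lemma no_vertical_line:
  assumes "compact (zero_set f)"
  shows "\<not> ({x0} \<times> UNIV \<subseteq> zero_set f)"
proof
  assume sub: "{x0} \<times> UNIV \<subseteq> zero_set f"
  obtain B where B: "\<And>p. p \<in> zero_set f \<Longrightarrow> norm p \<le> B"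
    using compact_imp_bounded[OF assms] unfolding bounded_iff by blast
  have "(x0, B + 1) \<in> zero_set f" using sub by blast
  then have "norm (x0, B + 1) \<le> B" using B by blast
  moreover have "norm (B + 1) \<le> norm (x0, B + 1)" by (rule norm_snd_le)
  ultimately show False by simp
qed

lemma slice_finite:
  assumes "compact (zero_set f)"
  shows "finite (zero_set f \<inter> ({x0} \<times> UNIV))"
proof (cases "sec x0 f = 0")
  case True
  then have "{x0} \<times> UNIV \<subseteq> zero_set f" by (auto simp: zero_set_def eval2_sec)
  then show ?thesis using no_vertical_line[OF assms] by blast
next
  case False
  have "zero_set f \<inter> ({x0} \<times> UNIV) \<subseteq> (\<lambda>y. (x0, y)) ` {y. poly (sec x0 f) y = 0}"
    by (auto simp: zero_set_def eval2_sec)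
  moreover have "finite {y. poly (sec x0 f) y = 0}" using poly_roots_finite[OF False] .
  ultimately show ?thesis using finite_subset by blast
qed

lemma strip_comp:
  assumes fn: "finei f s s'" and W: "W \<in> components (zero_set f \<inter> ({s<..<s'} \<times> UNIV))"
  shows "\<exists>c d. boxprop f s s' c d \<and> W = zero_set f \<inter> ({s<..<s'} \<times> {c<..<d})"
proof -
  define S where "S = zero_set f \<inter> ({s<..<s'} \<times> UNIV)"
  obtain q where q: "q \<in> W" using W in_components_nonempty by blast
  have qS: "q \<in> S" using q W in_components_subset S_def by blast
  obtain \<epsilon> where e: "\<epsilon> > 0" and bp: "boxprop f s s' (snd q - \<epsilon>) (snd q + \<epsilon>)"
    using fn qS unfolding finei_def S_def by (cases q) auto
  define c where "c = snd q - \<epsilon>"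
  define d where "d = snd q + \<epsilon>"
  note bp = bp[folded c_def d_def]
  define G where "G = zero_set f \<inter> ({s<..<s'} \<times> {c<..<d})"
  have GS: "G \<subseteq> S" unfolding G_def S_def by auto
  have Geq: "G = (\<lambda>x. (x, phi f c d x)) ` {s<..<s'}"
    unfolding G_def using graph_eq(2)[OF bp, of "{s<..<s'}"] by (simp add: subset_iff)
  have Gc: "connected G" unfolding Geq
    by (intro graph_connected[OF bp]) (auto simp: is_interval_def)
  have qG: "q \<in> G" using qS e unfolding G_def S_def c_def d_def by (cases q) auto
  have o: "openin (top_of_set S) G"
  proof -
    have "G = S \<inter> (UNIV \<times> {c<..<d})" unfolding G_def S_def by auto
    then show ?thesis by (simp add: openin_open_Int open_Times)
  qed
  have cl: "closedin (top_of_set S) G"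
  proof -
    have "G = S \<inter> (UNIV \<times> {c..d})"
    proof
      show "G \<subseteq> S \<inter> (UNIV \<times> {c..d})" unfolding G_def S_def by auto
      show "S \<inter> (UNIV \<times> {c..d}) \<subseteq> G"
      proof
        fix p assume p: "p \<in> S \<inter> (UNIV \<times> {c..d})"
        obtain a b where ab: "p = (a, b)" by (cases p)
        have "a \<in> {s..s'}" "b \<in> {c..d}" "eval2 f (a, b) = 0" using p ab unfolding S_def zero_set_def by auto
        then have "c < b \<and> b < d" using bp unfolding boxprop_def by blast
        then show "p \<in> G" using p ab unfolding G_def S_def by auto
      qed
    qed
    then show ?thesis by (simp add: closedin_closed_Int closed_Times)
  qed
  have WS: "W \<subseteq> S" using W in_components_subset S_def by blast
  have "W \<subseteq> G" using clopen_sub[OF in_components_connected[OF W] WS[unfolded S_def] o[unfolded S_def] cl[unfolded S_def]] q qG by blast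
  moreover have "G \<subseteq> W" using components_maximal[OF W Gc GS[unfolded S_def]] q qG by blast
  ultimately show ?thesis using bp G_def by blast
qed

lemma strip_comps_finite:
  assumes cpt: "compact (zero_set f)" and fn: "finei f s s'" and ss: "s < s'"
  shows "finite (components (zero_set f \<inter> ({s<..<s'} \<times> UNIV)))"
proof -
  define S where "S = zero_set f \<inter> ({s<..<s'} \<times> UNIV)"
  define m where "m = (s + s') / 2"
  have m: "m \<in> {s<..<s'}" using ss m_def by auto
  have "components S \<subseteq> (\<lambda>p. connected_component_set S p) ` (zero_set f \<inter> ({m} \<times> UNIV))"
  proof
    fix W assume W: "W \<in> components S"
    obtain c d where bp: "boxprop f s s' c d" and Weq: "W = zero_set f \<inter> ({s<..<s'} \<times> {c<..<d})"
      using strip_comp[OF fn W[unfolded S_def]] by blast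
    define p where "p = (m, phi f c d m)"
    have "p \<in> W" unfolding Weq p_def
      using graph_eq(2)[OF bp, of "{s<..<s'}"] m by (force simp: subset_iff)
    then have pW: "p \<in> W" "p \<in> zero_set f \<inter> ({m} \<times> UNIV)" using Weq p_def by auto
    obtain x where x: "x \<in> S" "W = connected_component_set S x" using W components_iff by blast
    then have "connected_component_set S p = W" using connected_component_eq pW(1) by blast
    then show "W \<in> (\<lambda>p. connected_component_set S p) ` (zero_set f \<inter> ({m} \<times> UNIV))"
      using pW(2) by blast
  qed
  moreover have "finite (zero_set f \<inter> ({m} \<times> UNIV))" by (rule slice_finite[OF cpt])
  ultimately show ?thesis unfolding S_def[symmetric] using finite_subset by blast
qed

lemma cover:
  fixes f :: "real poly poly"
  assumes cpt: "compact (zero_set f)"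
    and finA: "finite {x. \<exists>y. eval2 f (x,y) = 0 \<and> eval2 (pderiv f) (x,y) = 0}"
    and xA: "x \<notin> {x. \<exists>y. eval2 f (x,y) = 0 \<and> eval2 (pderiv f) (x,y) = 0}"
    and xD: "x \<notin> dyadics"
  shows "\<exists>nk\<in>goodI f. x \<in> DI (fst nk) (snd nk)"
proof -
  define A where "A = {x. \<exists>y. eval2 f (x,y) = 0 \<and> eval2 (pderiv f) (x,y) = 0}"
  obtain \<eta> where eta: "\<eta> > 0" "\<And>a. a \<in> A \<Longrightarrow> a \<noteq> x \<Longrightarrow> \<eta> \<le> dist x a"
    using finite_set_avoid[OF finA[folded A_def], of x] by blast
  have ns: "\<forall>x'\<in>{x - \<eta>/2..x + \<eta>/2}. \<forall>y. eval2 f (x',y) = 0 \<longrightarrow> eval2 (pderiv f) (x',y) \<noteq> 0"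
  proof (intro ballI allI impI notI)
    fix x' y assume x': "x' \<in> {x - \<eta>/2..x + \<eta>/2}" "eval2 f (x',y) = 0" "eval2 (pderiv f) (x',y) = 0"
    then have "x' \<in> A" unfolding A_def by blast
    moreover have "x' \<noteq> x" using \<open>x' \<in> A\<close> xA A_def by blast
    ultimately have "\<eta> \<le> dist x x'" using eta by blast
    then show False using x' eta(1) by (auto simp: dist_real_def)
  qed
  obtain \<delta> where d0: "\<delta> > 0" and dd: "\<forall>q\<in>zero_set f. fst q \<in> {x - \<eta>/2..x + \<eta>/2} \<longrightarrow>
            (\<exists>\<epsilon>>0. boxprop f (fst q - \<delta>) (fst q + \<delta>) (snd q - \<epsilon>) (snd q + \<epsilon>))"
    using uniform_box[OF cpt ns] by blast
  obtain n0 where n0: "(1/2::real)^n0 < min \<delta> (\<eta>/2)"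
    using real_arch_pow_inv[of "min \<delta> (\<eta>/2)" "1/2"] d0 eta(1) by auto
  have fine_n0: "finei f (lo n0 \<lfloor>x * 2^n0\<rfloor>) (hi n0 \<lfloor>x * 2^n0\<rfloor>)"
    unfolding finei_def
  proof (intro ballI impI)
    fix q assume q: "q \<in> zero_set f" "lo n0 \<lfloor>x * 2^n0\<rfloor> < fst q \<and> fst q < hi n0 \<lfloor>x * 2^n0\<rfloor>"
    define l where "l = lo n0 \<lfloor>x * 2^n0\<rfloor>"
    define h where "h = hi n0 \<lfloor>x * 2^n0\<rfloor>"
    have xin: "x \<in> {l<..<h}" using nondyadic_DI[OF xD, of n0] unfolding DI_def l_def h_def .
    have hl: "h - l = 1/2^n0" using lo_hi unfolding l_def h_def by blast
    have hl2: "1/2^n0 = (1/2::real)^n0" by (simp add: power_one_over)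
    have qin: "fst q \<in> {x - \<eta>/2..x + \<eta>/2}" using q xin hl hl2 n0 unfolding l_def[symmetric] h_def[symmetric] by auto
    obtain \<epsilon> where "\<epsilon> > 0" "boxprop f (fst q - \<delta>) (fst q + \<delta>) (snd q - \<epsilon>) (snd q + \<epsilon>)"
      using dd q(1) qin by blast
    moreover have "fst q - \<delta> \<le> l" "h \<le> fst q + \<delta>" using q hl hl2 n0 unfolding l_def[symmetric] h_def[symmetric] by auto
    ultimately show "\<exists>\<epsilon>>0. boxprop f l h (snd q - \<epsilon>) (snd q + \<epsilon>)" using boxprop_mono by blast
  qed
  define P where "P n \<longleftrightarrow> finei f (lo n \<lfloor>x * 2^n\<rfloor>) (hi n \<lfloor>x * 2^n\<rfloor>)" for n
  define n where "n = (LEAST n. P n)"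
  have Pn: "P n" unfolding n_def using fine_n0 P_def by (metis LeastI)
  have "(n, \<lfloor>x * 2^n\<rfloor>) \<in> goodI f"
    unfolding goodI_def
  proof (clarsimp, intro conjI allI impI)
    show "finei f (lo n \<lfloor>x * 2 ^ n\<rfloor>) (hi n \<lfloor>x * 2 ^ n\<rfloor>)" using Pn P_def by simp
    fix m k' assume m: "m < n" "DI n \<lfloor>x * 2 ^ n\<rfloor> \<subseteq> DI m k'"
    then have "x \<in> DI m k'" using nondyadic_DI[OF xD, of n] by blast
    then have "k' = \<lfloor>x * 2^m\<rfloor>" by (rule DI_floor)
    moreover have "\<not> P m" using m(1) unfolding n_def by (rule not_less_Least)
    ultimately show "\<not> finei f (lo m k') (hi m k')" unfolding P_def by simp
  qed
  then show ?thesis using nondyadic_DI[OF xD, of n] by force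
qed


theorem theorem2p3:
  fixes f :: "real poly poly"
  assumes "irreducible f"
    and "compact (zero_set f)"
    and "connected (zero_set f)"
  shows "\<exists>\<A>. cell_decomposition \<A> (zero_set f) \<and> finiteness_property \<A> (zero_set f)"
proof (cases "degree f = 0")
  case True
  have "zero_set f = {}"
  proof (rule ccontr)
    assume "zero_set f \<noteq> {}"
    then obtain p where p: "p \<in> zero_set f" by blast
    obtain a where fa: "f = [:a:]" using True by (metis degree_eq_zeroE)
    have "{fst p} \<times> UNIV \<subseteq> zero_set f"
      using p by (auto simp: zero_set_def fa eval2_def)
    then show False using no_vertical_line[OF assms(2)] by blast
  qed
  then show ?thesis
    by (intro exI[of _ "{}"]) (simp add: cell_decomposition_def finiteness_property_def)
next
  case False
  define X where "X = zero_set f"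
  define A where "A = {x. \<exists>y. eval2 f (x,y) = 0 \<and> eval2 (pderiv f) (x,y) = 0}"
  have finA: "finite A" unfolding A_def by (rule common_zero_finite[OF assms(1) False])
  have cpt: "compact X" using assms(2) X_def by simp
  define I where "I = goodI f"
  define S where "S nk = X \<inter> (DI (fst nk) (snd nk) \<times> UNIV)" for nk
  define Cells1 where "Cells1 = (\<Union>nk\<in>I. components (S nk))"
  define P where "P = X - (\<Union>nk\<in>I. DI (fst nk) (snd nk) \<times> UNIV)"
  define \<A> where "\<A> = Cells1 \<union> (\<lambda>p. {p}) ` P"
  have Sfine: "finei f (lo (fst nk) (snd nk)) (hi (fst nk) (snd nk))" if "nk \<in> I" for nk
    using that unfolding I_def goodI_def by auto
  have Seq: "S nk = zero_set f \<inter> ({lo (fst nk) (snd nk)<..<hi (fst nk) (snd nk)} \<times> UNIV)" for nk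
    unfolding S_def X_def DI_def by simp
  have cellC: "\<exists>s s' c d. s < s' \<and> boxprop f s s' c d \<and> e = X \<inter> ({s<..<s'} \<times> {c<..<d})"
    if E: "e \<in> Cells1" for e
  proof -
    obtain nk where nk: "nk \<in> I" "e \<in> components (S nk)" using E Cells1_def by blast
    obtain c d where "boxprop f (lo (fst nk) (snd nk)) (hi (fst nk) (snd nk)) c d"
       "e = zero_set f \<inter> ({lo (fst nk) (snd nk)<..<hi (fst nk) (snd nk)} \<times> {c<..<d})"
      using strip_comp[OF Sfine[OF nk(1)] nk(2)[unfolded Seq]] by blast
    then show ?thesis using lo_hi(1) X_def by blast
  qed
  have cells1_sub: "e \<subseteq> DI (fst nk) (snd nk) \<times> UNIV" if "nk \<in> I" "e \<in> components (S nk)" for e nk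
    using in_components_subset[OF that(2)] S_def by blast
  have dec: "cell_decomposition \<A> X"
    unfolding cell_decomposition_def
  proof (intro conjI)
    have "countable Cells1" unfolding Cells1_def
    proof (rule countable_UN)
      show "countable I" by simp
      fix nk assume "nk \<in> I"
      then have "finite (components (S nk))"
        unfolding Seq using strip_comps_finite[OF assms(2) Sfine] lo_hi(1) by blast
      then show "countable (components (S nk))" by (rule countable_finite)
    qed
    moreover have "countable P"
    proof -
      have "P \<subseteq> (\<Union>x\<in>A \<union> dyadics. X \<inter> ({x} \<times> UNIV))"
      proof
        fix p assume p: "p \<in> P"
        have "fst p \<in> A \<union> dyadics"
        proof (rule ccontr)
          assume "fst p \<notin> A \<union> dyadics"
          then obtain nk where "nk \<in> goodI f" "fst p \<in> DI (fst nk) (snd nk)"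
            using cover[OF assms(2) finA[unfolded A_def]] A_def by blast
          then show False using p unfolding P_def I_def by (cases p) auto
        qed
        then show "p \<in> (\<Union>x\<in>A \<union> dyadics. X \<inter> ({x} \<times> UNIV))" using p P_def by (cases p) auto
      qed
      moreover have "countable (\<Union>x\<in>A \<union> dyadics. X \<inter> ({x} \<times> UNIV))"
        using finA countable_dyadics slice_finite[OF assms(2)] X_def
        by (intro countable_UN) (auto intro: countable_finite)
      ultimately show ?thesis using countable_subset by blast
    qed
    ultimately show "countable \<A>" unfolding \<A>_def by simp
    show "\<Union>\<A> = X"
    proof
      show "\<Union>\<A> \<subseteq> X" unfolding \<A>_def Cells1_def P_def S_def
        using in_components_subset by fastforce
      show "X \<subseteq> \<Union>\<A>"
      proof
        fix p assume pX: "p \<in> X"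
        show "p \<in> \<Union>\<A>"
        proof (cases "\<exists>nk\<in>I. fst p \<in> DI (fst nk) (snd nk)")
          case True
          then obtain nk where nk: "nk \<in> I" "fst p \<in> DI (fst nk) (snd nk)" by blast
          then have pS: "p \<in> S nk" using pX S_def by (cases p) auto
          then have "connected_component_set (S nk) p \<in> components (S nk)" by (rule componentsI)
          then have "connected_component_set (S nk) p \<in> \<A>" using nk(1) unfolding \<A>_def Cells1_def by blast
          moreover have "p \<in> connected_component_set (S nk) p" using pS by simp
          ultimately show ?thesis by blast
        next
          case False
          then have "p \<in> P" using pX P_def by (cases p) auto
          then show ?thesis unfolding \<A>_def by blast
        qed
      qed
    qed
    show "{} \<notin> \<A>" unfolding \<A>_def Cells1_def using in_components_nonempty by blast
    show "\<forall>C\<in>\<A>. \<forall>D\<in>\<A>. C \<noteq> D \<longrightarrow> C \<inter> D = {}"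
    proof (intro ballI impI)
      fix C D assume CD: "C \<in> \<A>" "D \<in> \<A>" "C \<noteq> D"
      have c1: "C \<inter> D = {}" if H: "C \<in> Cells1" "D \<in> Cells1" "C \<noteq> D" for C D
      proof (rule ccontr)
        assume ne: "C \<inter> D \<noteq> {}"
        obtain nk where nk: "nk \<in> I" "C \<in> components (S nk)" using H Cells1_def by blast
        obtain nk' where nk': "nk' \<in> I" "D \<in> components (S nk')" using H Cells1_def by blast
        obtain p where p: "p \<in> C" "p \<in> D" using ne by blast
        have "fst p \<in> DI (fst nk) (snd nk)" "fst p \<in> DI (fst nk') (snd nk')"
          using cells1_sub[OF nk] cells1_sub[OF nk'] p by auto
        then have "nk = nk'" using goodI_disj[of "fst nk" "snd nk" f "fst nk'" "snd nk'"] nk nk'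
          unfolding I_def by simp
        then show False using components_nonoverlap[OF nk(2)] nk'(2) ne H(3) by simp
      qed
      have c2: "C \<inter> {p} = {}" if H: "C \<in> Cells1" "p \<in> P" for C p
      proof -
        obtain nk where nk: "nk \<in> I" "C \<in> components (S nk)" using H Cells1_def by blast
        then show ?thesis using cells1_sub[OF nk] H(2) unfolding P_def by blast
      qed
      show "C \<inter> D = {}" using CD c1 c2 unfolding \<A>_def by blast
    qed
    show "\<forall>C\<in>\<A>. C \<in> semialgebraic \<and> (is_0cell C \<or> is_1cell C \<or> is_2cell C)"
    proof (intro ballI)
    fix C assume H: "C \<in> \<A>"
    show "C \<in> semialgebraic \<and> (is_0cell C \<or> is_1cell C \<or> is_2cell C)"
    proof (cases "C \<in> Cells1")
      case True
      then obtain s s' c d where "s < s'" "boxprop f s s' c d" "C = X \<inter> ({s<..<s'} \<times> {c<..<d})"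
        using cellC by blast
      then show ?thesis using sa_cell cell_homeo X_def unfolding is_1cell_def by blast
    next
      case False
      then obtain p where "C = {p}" using H unfolding \<A>_def by blast
      then show ?thesis using sa_singleton unfolding is_0cell_def by blast
    qed
    qed
  qed
  have fp: "finiteness_property \<A> X"
    unfolding finiteness_property_def
  proof (intro ballI allI impI)
    fix a b g e assume sc: "shortest_curve X a b g" and e: "e \<in> \<A>"
    have ci: "curve_in X a b g" using sc shortest_curve_def by blast
    then have KX: "path_image g \<subseteq> X" unfolding curve_in_def by blast
    have "continuous_on {0..1} g" using ci unfolding curve_in_def piecewise_C2_curve_def by blast
    then have Kc: "connected (path_image g)" by (simp add: connected_path_image path_def)
    define K where "K = path_image g"
    show "path_image g \<inter> e = {} \<or>
          finite (components (path_image g \<inter> e)) \<and>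
          (\<forall>S\<in>components (path_image g \<inter> e). (\<exists>a. S = {a}) \<or> geodesic_segment \<A> S)"
    proof (cases "e \<in> Cells1")
      case True
      then obtain s s' c d where ss: "s < s'" "boxprop f s s' c d" "e = X \<inter> ({s<..<s'} \<times> {c<..<d})"
        using cellC by blast
      have fin: "finite (components (path_image g \<inter> e))"
        using comp_finite[OF ss(2) ss(1) Kc KX[unfolded X_def]] ss(3) X_def by simp
      have e1: "is_1cell e" unfolding is_1cell_def using cell_homeo[OF ss(2) ss(1)] ss(3) X_def by simp
      have "(\<exists>a. S' = {a}) \<or> geodesic_segment \<A> S'" if S': "S' \<in> components (path_image g \<inter> e)" for S'
      proof (cases "\<exists>a b. a \<in> S' \<and> b \<in> S' \<and> a \<noteq> b")
        case True
        have "connected S'" using in_components_connected[OF S'] .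
        moreover have "S' \<subseteq> e" using in_components_subset[OF S'] by blast
        ultimately have "geodesic_segment \<A> S'" unfolding geodesic_segment_def
          using True e e1 by blast
        then show ?thesis by blast
      next
        case False
        obtain a where "a \<in> S'" using in_components_nonempty[OF S'] by blast
        then have "S' = {a}" using False by blast
        then show ?thesis by blast
      qed
      then show ?thesis using fin by blast
    next
      case False
      then obtain p where ep: "e = {p}" using e unfolding \<A>_def by blast
      show ?thesis
      proof (cases "p \<in> path_image g")
        case True
        then have "path_image g \<inter> e = {p}" using ep by blast
        moreover have "components {p} = {{p}}" by (simp add: components_eq_sing_iff)
        ultimately show ?thesis by simp
      next
        case False
        then show ?thesis using ep by blast
      qed
    qed
  qed
  show ?thesis using dec fp X_def by blast
qed

end
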